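(* Fix $\alpha\in(0,1)$ and define, for $t\in\mathbb N^*$, \[ \gamma_0(t,\alpha)=\frac{t^2}{\left(\frac{\alpha^2}{t+1}\right)^{1/t}(t+1)-1}-t. \] Then, as $t\to\infty$, $\gamma_0(t,\alpha)=2\log(1/\alpha)+\log(t+1)+o(1)$. *)

theory Defs
  imports "HOL-Analysis.Analysis"
begin

definition gamma0 :: "nat \<Rightarrow> real \<Rightarrow> real" where
  "gamma0 t \<alpha> = (real t)^2 / ((\<alpha>^2 / (real t + 1)) powr (1 / real t) * (real t + 1) - 1) - real t"

end

theory Submission
  imports Defs "HOL-Real_Asymp.Real_Asymp"
begin

lemma aux: fixes a::real assumes "0<a" "a<1"
 shows "((\<lambda>x::real. x^2 / (exp ((2*ln a - ln (x+1))/x) * (x+1) - 1) - x - (- 2 * ln a + ln (x + 1))) \<longlongrightarrow> 0) at_top"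
  using assms by real_asymp

theorem proposition1:
  fixes \<alpha> :: real
  assumes "0 < \<alpha>" and "\<alpha> < 1"
  shows "((\<lambda>t::nat. gamma0 t \<alpha> - (2 * ln (1 / \<alpha>) + ln (real t + 1))) \<longlongrightarrow> 0) at_top"
proof -
  have L: "((\<lambda>t::nat. real t^2 / (exp ((2*ln \<alpha> - ln (real t+1))/real t) * (real t+1) - 1) - real t - (- 2 * ln \<alpha> + ln (real t + 1))) \<longlongrightarrow> 0) at_top"
    using filterlim_compose[OF aux[OF assms] filterlim_real_sequentially] by (simp add: o_def)
  have ev: "\<forall>\<^sub>F t in at_top. real t^2 / (exp ((2*ln \<alpha> - ln (real t+1))/real t) * (real t+1) - 1) - real t - (- 2 * ln \<alpha> + ln (real t + 1))
      = gamma0 t \<alpha> - (2 * ln (1 / \<alpha>) + ln (real t + 1))"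
  proof (rule eventually_mono[OF eventually_gt_at_top[of 0]])
    fix t :: nat assume "0 < t"
    have "(\<alpha>^2 / (real t + 1)) powr (1 / real t) = exp ((2*ln \<alpha> - ln (real t+1))/real t)"
      using assms by (simp add: powr_def ln_div ln_mult power2_eq_square)
    then show "real t^2 / (exp ((2*ln \<alpha> - ln (real t+1))/real t) * (real t+1) - 1) - real t - (- 2 * ln \<alpha> + ln (real t + 1))
      = gamma0 t \<alpha> - (2 * ln (1 / \<alpha>) + ln (real t + 1))"
      using assms by (simp add: gamma0_def ln_div)
  qed
  show ?thesis using Lim_transform_eventually[OF L ev] .
qed

end
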